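(* Fix a transcript whose feasible region $\Phi_T$ is nonempty and bounded. For every function $\hat G:S^{d-1}\to\mathbb{R}$, \[ \sup_{x\in\Phi_T}\ \sup_{v\in S^{d-1}}\bigl|\hat G(v)-\langle x,v\rangle\bigr|\;\ge\;\tfrac12\,\mathrm{diam}(\Phi_T), \] with equality for the rule $\hat G(v)=\tfrac12\bigl(\sup_{x\in\Phi_T}\langle x,v\rangle+\inf_{x\in\Phi_T}\langle x,v\rangle\bigr)$. Consequently $\mathrm{OPT}^{\mathrm{improper}}_d(T,\delta)=\inf_{\mathcal R}\sup\tfrac12\mathrm{diam}(\Phi_T)$, the supremum being over all transcripts produced by $\mathcal R$ with answers chosen online arbitrarily subject to $\Phi_T\neq\emptyset$.
   Context: Improper linear reconstruction game: fix $d\ge1$, $T\ge0$, $\delta>0$. An adversary holds a secret $x^*\in\mathbb{R}^d$; in each round $t=1,\dots,T$ the reconstructor (possibly adaptively) chooses $v_t\in S^{d-1}$ and receives $r_t\in\mathbb{R}$ with $|r_t-\langle x^*,v_t\rangle|\le\delta$. After $T$ rounds the reconstructor outputs a function $\hat G_T:S^{d-1}\to\mathbb{R}$. All strategies are deterministic. $\mathrm{OPT}^{\mathrm{improper}}_d(T,\delta)=\inf_{\mathcal R}\sup_{x^*}\sup_{\mathcal A}\sup_{v\in S^{d-1}}|\hat G_T(v)-\langle x^*,v\rangle|$, the infimum over improper reconstructor strategies and the suprema over secrets and adversary answer strategies consistent with the secret. The feasible region is $\Phi_T=\{x\in\mathbb{R}^d: |\langle x,v_t\rangle-r_t|\le\delta\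 \forall t\in[T]\}$; $\mathrm{diam}(A)=\sup_{x,y\in A}\|x-y\|_2$. *)

theory Defs
  imports "HOL-Analysis.Analysis"
begin

definition Phi :: "nat \<Rightarrow> real \<Rightarrow> (nat \<Rightarrow> 'a::euclidean_space) \<Rightarrow> (nat \<Rightarrow> real) \<Rightarrow> 'a set" where
  "Phi T \<delta> vs rs = {x. \<forall>t<T. \<bar>x \<bullet> vs t - rs t\<bar> \<le> \<delta>}"

definition worst_err :: "'a::euclidean_space set \<Rightarrow> ('a \<Rightarrow> real) \<Rightarrow> ereal" where
  "worst_err S G = (SUP x\<in>S. SUP v\<in>sphere 0 1. ereal \<bar>G v - x \<bullet> v\<bar>)"

definition ediam :: "'a::metric_space set \<Rightarrow> ereal" where
  "ediam S = (SUP x\<in>S. SUP y\<in>S. ereal (dist x y))"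

definition mid_rule :: "'a::euclidean_space set \<Rightarrow> 'a \<Rightarrow> real" where
  "mid_rule S v = (Sup ((\<lambda>x. x \<bullet> v) ` S) + Inf ((\<lambda>x. x \<bullet> v) ` S)) / 2"

text \<open>A deterministic (adaptive) reconstructor is a pair (q, out): q maps the list of answers
  received so far to the next query (on the unit sphere), out maps the full answer list to the
  output function. Because the reconstructor is deterministic, the whole transcript is determined
  by the answer list rs: the query in round t (0-based) is q (take t rs).\<close>
definition valid_recon :: "((real list \<Rightarrow> 'a::euclidean_space) \<times> (real list \<Rightarrow> 'a \<Rightarrow> real)) \<Rightarrow> bool" where
  "valid_recon R = (\<forall>rs. fst R rs \<in> sphere 0 1)"

definition queries :: "(real list \<Rightarrow> 'a) \<Rightarrow> real list \<Rightarrow> nat \<Rightarrow> 'a" where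
  "queries q rs = (\<lambda>t. q (take t rs))"

definition answers :: "real list \<Rightarrow> nat \<Rightarrow> real" where
  "answers rs = (\<lambda>t. rs ! t)"

text \<open>OPT improper: inf over reconstructors, sup over secrets x and adversary answer
  sequences consistent with x (any adaptive deterministic adversary against a deterministic
  reconstructor produces exactly such a sequence), sup over directions v.\<close>
definition OPT_improper :: "'a::euclidean_space itself \<Rightarrow> nat \<Rightarrow> real \<Rightarrow> ereal" where
  "OPT_improper _ T \<delta> =
     (INF R\<in>{R::(real list \<Rightarrow> 'a) \<times> (real list \<Rightarrow> 'a \<Rightarrow> real). valid_recon R}.
        SUP x\<in>(UNIV::'a set).
          SUP rs\<in>{rs. length rs = T \<and> x \<in> Phi T \<delta> (queries (fst R) rs) (answers rs)}.
            SUP v\<in>sphere (0::'a) 1. ereal \<bar>snd R rs v - x \<bullet> v\<bar>)"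

end

theory Submission
  imports Defs
begin

lemma phi_closed: "closed (Phi T \<delta> vs rs)"
proof -
  have "Phi T \<delta> vs rs = (\<Inter>t\<in>{..<T}. {x. \<bar>x \<bullet> vs t - rs t\<bar> \<le> \<delta>})"
    unfolding Phi_def by auto
  moreover have "closed {x::'a. \<bar>x \<bullet> vs t - rs t\<bar> \<le> \<delta>}" for t
    by (intro closed_Collect_le continuous_intros)
  ultimately show ?thesis by auto
qed

lemma sup_inf_attained:
  fixes S :: "'a::euclidean_space set"
  assumes "compact S" "S \<noteq> {}"
  shows "\<exists>a\<in>S. a \<bullet> v = Sup ((\<lambda>x. x \<bullet> v) ` S)" "\<exists>b\<in>S. b \<bullet> v = Inf ((\<lambda>x. x \<bullet> v) ` S)"
proof -
  have c: "compact ((\<lambda>x. x \<bullet> v) ` S)"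
    by (intro compact_continuous_image continuous_intros assms)
  have ne: "(\<lambda>x. x \<bullet> v) ` S \<noteq> {}" using assms by auto
  have "Sup ((\<lambda>x. x \<bullet> v) ` S) \<in> (\<lambda>x. x \<bullet> v) ` S"
    using c ne by (simp add: closed_contains_Sup compact_imp_bounded compact_imp_closed bounded_imp_bdd_above)
  then show "\<exists>a\<in>S. a \<bullet> v = Sup ((\<lambda>x. x \<bullet> v) ` S)" by force
  have "Inf ((\<lambda>x. x \<bullet> v) ` S) \<in> (\<lambda>x. x \<bullet> v) ` S"
    using c ne by (simp add: closed_contains_Inf compact_imp_bounded compact_imp_closed bounded_imp_bdd_below)
  then show "\<exists>b\<in>S. b \<bullet> v = Inf ((\<lambda>x. x \<bullet> v) ` S)" by force
qed

lemma mid_bound: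
  fixes S :: "'a::euclidean_space set"
  assumes "compact S" "x \<in> S" "norm v = 1"
  shows "\<exists>a\<in>S. \<exists>b\<in>S. \<bar>mid_rule S v - x \<bullet> v\<bar> \<le> dist a b / 2"
proof -
  have ne: "S \<noteq> {}" using assms by auto
  obtain a b where a: "a \<in> S" "a \<bullet> v = Sup ((\<lambda>x. x \<bullet> v) ` S)"
    and b: "b \<in> S" "b \<bullet> v = Inf ((\<lambda>x. x \<bullet> v) ` S)"
    using sup_inf_attained[OF assms(1) ne] by metis
  have bd: "bounded ((\<lambda>x. x \<bullet> v) ` S)"
    by (intro compact_imp_bounded compact_continuous_image continuous_intros assms)
  have "x \<bullet> v \<le> a \<bullet> v" using a bd assms(2)
    by (metis cSup_upper bounded_imp_bdd_above image_eqI)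
  moreover have "b \<bullet> v \<le> x \<bullet> v" using b bd assms(2)
    by (metis cInf_lower bounded_imp_bdd_below image_eqI)
  moreover have e: "a \<bullet> v - b \<bullet> v \<le> dist a b"
    using Cauchy_Schwarz_ineq2[of "a - b" v] assms(3) by (simp add: dist_norm inner_diff_left)
  have gen: "\<bar>(s + i) / 2 - z\<bar> \<le> (s - i) / 2" if "i \<le> z" "z \<le> s" for s i z :: real
    using that by (auto simp: abs_if field_simps)
  ultimately have "\<bar>mid_rule S v - x \<bullet> v\<bar> \<le> (a \<bullet> v - b \<bullet> v) / 2"
    unfolding mid_rule_def using a b gen[of "b \<bullet> v" "x \<bullet> v" "a \<bullet> v"] by simp
  hence "\<bar>mid_rule S v - x \<bullet> v\<bar> \<le> dist a b / 2" using e by argo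
  then show ?thesis using a b by blast
qed

lemma sphere_ne: "sphere (0::'a::euclidean_space) 1 \<noteq> {}"
proof -
  obtain e :: 'a where "e \<in> Basis" using nonempty_Basis by blast
  then show ?thesis by (auto intro!: exI[of _ e])
qed

lemma lower_pt:
  fixes S :: "'a::euclidean_space set"
  assumes "x \<in> S" "y \<in> S"
  shows "ereal (dist x y / 2) \<le> worst_err S G"
proof (cases "x = y")
  case True
  obtain v :: 'a where v: "v \<in> sphere 0 1" using sphere_ne by blast
  have "ereal (dist x y / 2) \<le> ereal \<bar>G v - x \<bullet> v\<bar>" using True by simp
  also have "\<dots> \<le> worst_err S G" unfolding worst_err_def
    by (rule SUP_upper2[OF assms(1)], rule SUP_upper[OF v])
  finally show ?thesis .
next
  case False
  define v where "v = (x - y) /\<^sub>R norm (x - y)"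
  have v: "v \<in> sphere 0 1" using False by (simp add: v_def)
  have "(x - y) \<bullet> v = norm (x - y)" using False
    by (simp add: v_def inner_diff_left power2_norm_eq_inner[symmetric] power2_eq_square)
  hence "dist x y \<le> \<bar>G v - x \<bullet> v\<bar> + \<bar>G v - y \<bullet> v\<bar>"
    by (simp add: dist_norm inner_diff_left)
  hence "dist x y / 2 \<le> \<bar>G v - x \<bullet> v\<bar> \<or> dist x y / 2 \<le> \<bar>G v - y \<bullet> v\<bar>" by linarith
  moreover have "ereal \<bar>G v - x \<bullet> v\<bar> \<le> worst_err S G" unfolding worst_err_def
    by (rule SUP_upper2[OF assms(1)], rule SUP_upper[OF v])
  moreover have "ereal \<bar>G v - y \<bullet> v\<bar> \<le> worst_err S G" unfolding worst_err_def
    by (rule SUP_upper2[OF assms(2)], rule SUP_upper[OF v])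
  ultimately show ?thesis by (meson ereal_less_eq(3) order_trans)
qed

lemma lower_ediam:
  fixes S :: "'a::euclidean_space set"
  shows "ediam S / 2 \<le> worst_err S G"
proof -
  have "ediam S \<le> 2 * worst_err S G" unfolding ediam_def
  proof (intro SUP_least)
    fix x y assume "x \<in> S" "y \<in> S"
    hence "ereal (dist x y / 2) \<le> worst_err S G" by (rule lower_pt)
    hence "2 * ereal (dist x y / 2) \<le> 2 * worst_err S G"
      by (intro ereal_mult_left_mono) auto
    thus "ereal (dist x y) \<le> 2 * worst_err S G" by simp
  qed
  thus ?thesis
    by (subst ereal_divide_le_pos) auto
qed

lemma ediam_unbounded:
  fixes S :: "'a::metric_space set"
  assumes "S \<noteq> {}" "\<not> bounded S"
  shows "ediam S = \<infinity>"
proof (rule ereal_top)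
  fix B
  obtain x0 where x0: "x0 \<in> S" using assms by auto
  obtain y where y: "y \<in> S" "\<not> dist x0 y \<le> B" using assms(2) unfolding bounded_def by blast
  have "ereal B \<le> ereal (dist x0 y)" using y by simp
  also have "\<dots> \<le> ediam S" unfolding ediam_def
    by (rule SUP_upper2[OF x0], rule SUP_upper[OF y(1)])
  finally show "ereal B \<le> ediam S" .
qed

lemma diam_le_ediam:
  fixes S :: "'a::metric_space set"
  assumes "compact S" "S \<noteq> {}"
  shows "ereal (diameter S) \<le> ediam S"
proof -
  obtain x y where "x \<in> S" "y \<in> S" "dist x y = diameter S"
    using diameter_compact_attained[OF assms] by blast
  then show ?thesis unfolding ediam_def
    by (metis SUP_upper2 SUP_upper)
qed

lemma part1:
  fixes S :: "'a::euclidean_space set"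
  assumes "compact S" "S \<noteq> {}"
  shows "ereal (diameter S / 2) \<le> worst_err S G"
    "worst_err S (mid_rule S) \<le> ereal (diameter S / 2)"
proof -
  obtain x y where "x \<in> S" "y \<in> S" "dist x y = diameter S"
    using diameter_compact_attained[OF assms] by blast
  then show "ereal (diameter S / 2) \<le> worst_err S G" using lower_pt by metis
  show "worst_err S (mid_rule S) \<le> ereal (diameter S / 2)" unfolding worst_err_def
  proof (intro SUP_least)
    fix x v assume x: "x \<in> S" and v: "v \<in> sphere (0::'a) 1"
    obtain a b where ab: "a \<in> S" "b \<in> S" "\<bar>mid_rule S v - x \<bullet> v\<bar> \<le> dist a b / 2"
      using mid_bound[OF assms(1) x, of v] v by auto
    have "dist a b \<le> diameter S" using ab assms(1) by (intro diameter_bounded_bound compact_imp_bounded)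
    then show "ereal \<bar>mid_rule S v - x \<bullet> v\<bar> \<le> ereal (diameter S / 2)" using ab by simp
  qed
qed

lemma mid_le_ediam:
  fixes S :: "'a::euclidean_space set"
  assumes "closed S" "S \<noteq> {}"
  shows "worst_err S (mid_rule S) \<le> ediam S / 2"
proof (cases "bounded S")
  case True
  hence c: "compact S" using assms by (simp add: compact_eq_bounded_closed)
  have "worst_err S (mid_rule S) \<le> ereal (diameter S / 2)" using part1(2)[OF c assms(2)] .
  also have "\<dots> = ereal (diameter S) / 2" by simp
  also have "\<dots> \<le> ediam S / 2" using diam_le_ediam[OF c assms(2)] by (intro ereal_divide_right_mono) auto
  finally show ?thesis .
next
  case False
  then show ?thesis using ediam_unbounded[OF assms(2) False] by simp
qed

lemma swap_sup:
  fixes f :: "'x \<Rightarrow> 'r \<Rightarrow> ereal"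
  shows "(SUP x\<in>UNIV. SUP rs\<in>{rs. L rs \<and> x \<in> A rs}. f x rs) = (SUP rs\<in>{rs. L rs \<and> A rs \<noteq> {}}. SUP x\<in>A rs. f x rs)"
proof (rule antisym)
  show "(SUP x\<in>UNIV. SUP rs\<in>{rs. L rs \<and> x \<in> A rs}. f x rs) \<le> (SUP rs\<in>{rs. L rs \<and> A rs \<noteq> {}}. SUP x\<in>A rs. f x rs)"
  proof (intro SUP_least)
    fix x rs assume "rs \<in> {rs. L rs \<and> x \<in> A rs}"
    then show "f x rs \<le> (SUP rs\<in>{rs. L rs \<and> A rs \<noteq> {}}. SUP x\<in>A rs. f x rs)"
      by (intro SUP_upper2[of rs] SUP_upper) auto
  qed
  show "(SUP rs\<in>{rs. L rs \<and> A rs \<noteq> {}}. SUP x\<in>A rs. f x rs) \<le> (SUP x\<in>UNIV. SUP rs\<in>{rs. L rs \<and> x \<in> A rs}. f x rs)"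
  proof (intro SUP_least)
    fix x rs assume "rs \<in> {rs. L rs \<and> A rs \<noteq> {}}" "x \<in> A rs"
    then show "f x rs \<le> (SUP x\<in>UNIV. SUP rs\<in>{rs. L rs \<and> x \<in> A rs}. f x rs)"
      by (intro SUP_upper2[of x] SUP_upper) auto
  qed
qed

theorem mainTheorem18:
  fixes T :: nat and \<delta> :: real
  assumes "\<delta> > 0"
  shows
    "(\<forall>(vs :: nat \<Rightarrow> 'a::euclidean_space) (rs :: nat \<Rightarrow> real).
        (\<forall>t<T. vs t \<in> sphere 0 1) \<and> Phi T \<delta> vs rs \<noteq> {} \<and> bounded (Phi T \<delta> vs rs) \<longrightarrow>
          (\<forall>G :: 'a \<Rightarrow> real. worst_err (Phi T \<delta> vs rs) G \<ge> ereal (diameter (Phi T \<delta> vs rs) / 2))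
          \<and> worst_err (Phi T \<delta> vs rs) (mid_rule (Phi T \<delta> vs rs)) = ereal (diameter (Phi T \<delta> vs rs) / 2))
     \<and> OPT_improper TYPE('a) T \<delta> =
       (INF R\<in>{R::(real list \<Rightarrow> 'a) \<times> (real list \<Rightarrow> 'a \<Rightarrow> real). valid_recon R}.
          SUP rs\<in>{rs. length rs = T \<and> Phi T \<delta> (queries (fst R) rs) (answers rs) \<noteq> {}}.
            ediam (Phi T \<delta> (queries (fst R) rs) (answers rs)) / 2)"
proof (rule conjI)
  show "\<forall>(vs :: nat \<Rightarrow> 'a::euclidean_space) (rs :: nat \<Rightarrow> real).
        (\<forall>t<T. vs t \<in> sphere 0 1) \<and> Phi T \<delta> vs rs \<noteq> {} \<and> bounded (Phi T \<delta> vs rs) \<longrightarrow>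
          (\<forall>G :: 'a \<Rightarrow> real. worst_err (Phi T \<delta> vs rs) G \<ge> ereal (diameter (Phi T \<delta> vs rs) / 2))
          \<and> worst_err (Phi T \<delta> vs rs) (mid_rule (Phi T \<delta> vs rs)) = ereal (diameter (Phi T \<delta> vs rs) / 2)"
  proof (intro allI impI)
    fix vs :: "nat \<Rightarrow> 'a" and rs :: "nat \<Rightarrow> real"
    assume h: "(\<forall>t<T. vs t \<in> sphere 0 1) \<and> Phi T \<delta> vs rs \<noteq> {} \<and> bounded (Phi T \<delta> vs rs)"
    hence c: "compact (Phi T \<delta> vs rs)" using phi_closed by (simp add: compact_eq_bounded_closed)
    show "(\<forall>G :: 'a \<Rightarrow> real. worst_err (Phi T \<delta> vs rs) G \<ge> ereal (diameter (Phi T \<delta> vs rs) / 2))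
          \<and> worst_err (Phi T \<delta> vs rs) (mid_rule (Phi T \<delta> vs rs)) = ereal (diameter (Phi T \<delta> vs rs) / 2)"
      using part1[OF c] h by (meson antisym)
  qed
next
  define A where "A = (\<lambda>(R::(real list \<Rightarrow> 'a) \<times> (real list \<Rightarrow> 'a \<Rightarrow> real)) rs. Phi T \<delta> (queries (fst R) rs) (answers rs))"
  have val: "(SUP x\<in>(UNIV::'a set).
          SUP rs\<in>{rs. length rs = T \<and> x \<in> Phi T \<delta> (queries (fst R) rs) (answers rs)}.
            SUP v\<in>sphere (0::'a) 1. ereal \<bar>snd R rs v - x \<bullet> v\<bar>)
        = (SUP rs\<in>{rs. length rs = T \<and> A R rs \<noteq> {}}. worst_err (A R rs) (snd R rs))" for R
    unfolding worst_err_def A_def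
    by (rule swap_sup[where L = "\<lambda>rs. length rs = T" and A = "\<lambda>rs. Phi T \<delta> (queries (fst R) rs) (answers rs)"])
  have lo: "(SUP rs\<in>{rs. length rs = T \<and> A R rs \<noteq> {}}. ediam (A R rs) / 2)
       \<le> (SUP rs\<in>{rs. length rs = T \<and> A R rs \<noteq> {}}. worst_err (A R rs) (snd R rs))" for R
    by (intro SUP_subset_mono order_refl lower_ediam)
  have hi: "(SUP rs\<in>{rs. length rs = T \<and> A (fst R, \<lambda>rs. mid_rule (A R rs)) rs \<noteq> {}}.
              worst_err (A (fst R, \<lambda>rs. mid_rule (A R rs)) rs) (snd (fst R, \<lambda>rs. mid_rule (A R rs)) rs))
       \<le> (SUP rs\<in>{rs. length rs = T \<and> A R rs \<noteq> {}}. ediam (A R rs) / 2)" for R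
  proof (rule SUP_subset_mono)
    show "{rs. length rs = T \<and> A (fst R, \<lambda>rs. mid_rule (A R rs)) rs \<noteq> {}} \<subseteq> {rs. length rs = T \<and> A R rs \<noteq> {}}"
      by (simp add: A_def)
    fix rs assume "rs \<in> {rs. length rs = T \<and> A (fst R, \<lambda>rs. mid_rule (A R rs)) rs \<noteq> {}}"
    hence ne: "A R rs \<noteq> {}" by (simp add: A_def)
    have cl: "closed (A R rs)" by (simp add: A_def phi_closed)
    show "worst_err (A (fst R, \<lambda>rs. mid_rule (A R rs)) rs) (snd (fst R, \<lambda>rs. mid_rule (A R rs)) rs) \<le> ediam (A R rs) / 2"
      using mid_le_ediam[OF cl ne] by (simp add: A_def)
  qed
  show "OPT_improper TYPE('a) T \<delta> =
       (INF R\<in>{R::(real list \<Rightarrow> 'a) \<times> (real list \<Rightarrow> 'a \<Rightarrow> real). valid_recon R}.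
          SUP rs\<in>{rs. length rs = T \<and> Phi T \<delta> (queries (fst R) rs) (answers rs) \<noteq> {}}.
            ediam (Phi T \<delta> (queries (fst R) rs) (answers rs)) / 2)"
  proof -
  have e1: "OPT_improper TYPE('a) T \<delta> = (INF R\<in>{R. valid_recon R}. SUP rs\<in>{rs. length rs = T \<and> A R rs \<noteq> {}}. worst_err (A R rs) (snd R rs))"
    unfolding OPT_improper_def val ..
  have e2: "(INF R\<in>{R::(real list \<Rightarrow> 'a) \<times> (real list \<Rightarrow> 'a \<Rightarrow> real). valid_recon R}.
          SUP rs\<in>{rs. length rs = T \<and> Phi T \<delta> (queries (fst R) rs) (answers rs) \<noteq> {}}.
            ediam (Phi T \<delta> (queries (fst R) rs) (answers rs)) / 2)
     = (INF R\<in>{R. valid_recon R}. SUP rs\<in>{rs. length rs = T \<and> A R rs \<noteq> {}}. ediam (A R rs) / 2)"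
    by (simp add: A_def)
  have "(INF R\<in>{R. valid_recon R}. SUP rs\<in>{rs. length rs = T \<and> A R rs \<noteq> {}}. worst_err (A R rs) (snd R rs))
     = (INF R\<in>{R. valid_recon R}. SUP rs\<in>{rs. length rs = T \<and> A R rs \<noteq> {}}. ediam (A R rs) / 2)"
  proof (rule antisym)
    show "(INF R\<in>{R. valid_recon R}. SUP rs\<in>{rs. length rs = T \<and> A R rs \<noteq> {}}. worst_err (A R rs) (snd R rs))
      \<le> (INF R\<in>{R. valid_recon R}. SUP rs\<in>{rs. length rs = T \<and> A R rs \<noteq> {}}. ediam (A R rs) / 2)"
    proof (rule INF_mono)
      fix R :: "(real list \<Rightarrow> 'a) \<times> (real list \<Rightarrow> 'a \<Rightarrow> real)"
      assume "R \<in> {R. valid_recon R}"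
      hence "(fst R, \<lambda>rs. mid_rule (A R rs)) \<in> {R. valid_recon R}" by (simp add: valid_recon_def)
      then show "\<exists>R'\<in>{R. valid_recon R}. (SUP rs\<in>{rs. length rs = T \<and> A R' rs \<noteq> {}}. worst_err (A R' rs) (snd R' rs))
        \<le> (SUP rs\<in>{rs. length rs = T \<and> A R rs \<noteq> {}}. ediam (A R rs) / 2)"
        using hi[of R] by blast
    qed
    show "(INF R\<in>{R. valid_recon R}. SUP rs\<in>{rs. length rs = T \<and> A R rs \<noteq> {}}. ediam (A R rs) / 2)
      \<le> (INF R\<in>{R. valid_recon R}. SUP rs\<in>{rs. length rs = T \<and> A R rs \<noteq> {}}. worst_err (A R rs) (snd R rs))"
      by (rule INF_mono) (use lo in blast)
  qed
  then show ?thesis using e1 e2 by simp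
  qed
qed

end
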